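(* Let $a<b$ and $c<d$ be real numbers, and let $f:[a,b]\times[c,d]\to\mathbb{R}$ be a continuous function whose first partial derivatives $D_1 f, D_2 f$ and mixed second partial derivative $D_2D_1 f$ exist and are continuous on $[a,b]\times[c,d]$. Then \begin{align*} &\int_a^b\int_c^d f(t,s)\,ds\,dt-\frac12\Big[(d-c)\int_a^b\big[f(t,c)+f(t,d)\big]\,dt+(b-a)\int_c^d\big[f(a,s)+f(b,s)\big]\,ds\Big]\\ &\quad+\frac14(b-a)(d-c)\big[f(a,c)+f(a,d)+f(b,c)+f(b,d)\big] \le \frac14(b-a)(d-c)\int_a^b\int_c^d |D_2D_1 f(t,s)|\,ds\,dt . \end{align*}
   Context: $D_1$ and $D_2$ denote partial differentiation with respect to the first and second variable respectively, so $D_2D_1 f=\frac{\partial}{\partial s}\frac{\partial f}{\partial t}$. *)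

theory Defs
  imports "HOL-Analysis.Analysis"
begin

end

theory Submission
  imports Defs
begin


lemma slice1:
  fixes h :: "real \<Rightarrow> real \<Rightarrow> real"
  assumes "continuous_on ({a..b} \<times> {c..d}) (\<lambda>(t, s). h t s)" "t \<in> {a..b}"
  shows "continuous_on {c..d} (h t)"
proof -
  have "continuous_on {c..d} ((\<lambda>(t, s). h t s) \<circ> (\<lambda>s. (t, s)))"
    apply (rule continuous_on_compose) apply (auto intro!: continuous_intros continuous_on_subset[OF assms(1)] simp: assms(2))
    using assms(2) by auto
  then show ?thesis by (simp add: o_def)
qed

lemma slice2:
  fixes h :: "real \<Rightarrow> real \<Rightarrow> real"
  assumes "continuous_on ({a..b} \<times> {c..d}) (\<lambda>(t, s). h t s)" "s \<in> {c..d}"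
  shows "continuous_on {a..b} (\<lambda>t. h t s)"
proof -
  have "continuous_on {a..b} ((\<lambda>(t, s). h t s) \<circ> (\<lambda>t. (t, s)))"
    apply (rule continuous_on_compose) apply (auto intro!: continuous_intros continuous_on_subset[OF assms(1)] simp: assms(2))
    using assms(2) by auto
  then show ?thesis by (simp add: o_def)
qed

lemma contPQ:
  fixes h :: "real \<Rightarrow> real \<Rightarrow> real"
  assumes "continuous_on S (\<lambda>(t, s). h t s)"
  shows "continuous_on S (\<lambda>(t, s). (t - \<alpha>) * (s - \<beta>) * h t s)"
    "continuous_on S (\<lambda>(t, s). (t - \<alpha>) * h t s)"
    "continuous_on S (\<lambda>(t, s). k * \<bar>h t s\<bar>)"
proof -
  have e: "(\<lambda>(t, s). (t - \<alpha>) * (s - \<beta>) * h t s) = (\<lambda>x. (fst x - \<alpha>) * (snd x - \<beta>) * (\<lambda>(t, s). h t s) x)"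
    "(\<lambda>(t, s). (t - \<alpha>) * h t s) = (\<lambda>x. (fst x - \<alpha>) * (\<lambda>(t, s). h t s) x)"
    "(\<lambda>(t, s). k * \<bar>h t s\<bar>) = (\<lambda>x. k * \<bar>(\<lambda>(t, s). h t s) x\<bar>)"
    by auto
  show "continuous_on S (\<lambda>(t, s). (t - \<alpha>) * (s - \<beta>) * h t s)"
    "continuous_on S (\<lambda>(t, s). (t - \<alpha>) * h t s)"
    "continuous_on S (\<lambda>(t, s). k * \<bar>h t s\<bar>)"
    unfolding e by (intro continuous_intros assms)+
qed

lemma int2:
  fixes h :: "real \<Rightarrow> real \<Rightarrow> real"
  assumes "continuous_on ({a..b} \<times> {c..d}) (\<lambda>(t, s). h t s)"
  shows "(\<lambda>t. integral {c..d} (h t)) integrable_on {a..b}"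
proof -
  have e: "cbox (a,c) (b,d) = {a..b} \<times> {c..d}" by (metis cbox_Pair_eq cbox_interval)
  show ?thesis
  using integral_integrable_2dim[of a c b d "\<lambda>(t, s). h t s"] assms
  unfolding e by (simp add: cbox_interval)
qed

lemma swap:
  fixes h :: "real \<Rightarrow> real \<Rightarrow> real"
  assumes "continuous_on ({a..b} \<times> {c..d}) (\<lambda>(t, s). h t s)"
  shows "integral {a..b} (\<lambda>t. integral {c..d} (h t)) = integral {c..d} (\<lambda>s. integral {a..b} (\<lambda>t. h t s))"
proof -
  have e: "cbox (a,c) (b,d) = {a..b} \<times> {c..d}" by (metis cbox_Pair_eq cbox_interval)
  show ?thesis
  using integral_swap_continuous[of a c b d h] assms
  unfolding e by (simp add: cbox_interval)
qed

lemma ibp: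
  fixes g g' :: "real \<Rightarrow> real"
  assumes "a \<le> b" "\<And>x. x \<in> {a..b} \<Longrightarrow> (g has_real_derivative g' x) (at x within {a..b})"
    "continuous_on {a..b} g'"
  shows "integral {a..b} (\<lambda>x. (x - (a+b)/2) * g' x) = (b-a)/2 * (g a + g b) - integral {a..b} g"
proof -
  have cg: "continuous_on {a..b} g"
    using DERIV_continuous_on assms(2) by blast
  have "((\<lambda>x. g x + (x - (a+b)/2) * g' x) has_integral
        ((b - (a+b)/2) * g b - (a - (a+b)/2) * g a)) {a..b}"
    apply (rule fundamental_theorem_of_calculus[OF assms(1), where f="\<lambda>x. (x - (a+b)/2) * g x"])
    apply (simp add: has_real_derivative_iff_has_vector_derivative[symmetric])
    apply (auto intro!: derivative_eq_intros assms(2))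
    done
  then have "integral {a..b} (\<lambda>x. g x + (x - (a+b)/2) * g' x) = (b-a)/2 * (g a + g b)"
    by (simp add: integral_unique algebra_simps add_divide_distrib diff_divide_distrib)
  moreover have "integral {a..b} (\<lambda>x. g x + (x - (a+b)/2) * g' x) =
      integral {a..b} g + integral {a..b} (\<lambda>x. (x - (a+b)/2) * g' x)"
    by (intro integral_add integrable_continuous_real cg continuous_intros assms(3))
  ultimately show ?thesis by linarith
qed

lemma int2':
  fixes h :: "real \<Rightarrow> real \<Rightarrow> real"
  assumes "continuous_on ({a..b} \<times> {c..d}) (\<lambda>(t, s). h t s)"
  shows "(\<lambda>s. integral {a..b} (\<lambda>t. h t s)) integrable_on {c..d}"
proof -
  have "continuous_on ({c..d} \<times> {a..b}) ((\<lambda>(t, s). h t s) \<circ> prod.swap)"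
    apply (rule continuous_on_compose)
    apply (intro continuous_intros)
    apply (rule continuous_on_subset[OF assms(1)])
    by auto
  then have "continuous_on ({c..d} \<times> {a..b}) (\<lambda>(s, t). h t s)"
    by (simp add: o_def case_prod_unfold prod.swap_def)
  from int2[OF this] show ?thesis by simp
qed

lemma alg:
  fixes X J1 J2 S T Fc Fd Fcd fac fbc fad fbd a b c d :: real
  assumes "X = (d-c)/2 * J1 + (d-c)/2 * J2 - ((b-a)/2 * S - T)"
    "J1 = (b-a)/2 * (fac + fbc) - Fc" "J2 = (b-a)/2 * (fad + fbd) - Fd" "Fcd = Fc + Fd"
  shows "X = T - 1/2 * ((d - c) * Fcd + (b - a) * S) + 1/4 * (b - a) * (d - c) * (fac + fad + fbc + fbd)"
  unfolding assms by (simp add: field_simps)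

theorem corollary3p1:
  fixes a b c d :: real
    and f D1f D2f D21f :: "real \<Rightarrow> real \<Rightarrow> real"
  assumes "a < b" and "c < d"
    and "continuous_on ({a..b} \<times> {c..d}) (\<lambda>(t, s). f t s)"
    and "\<And>t s. t \<in> {a..b} \<Longrightarrow> s \<in> {c..d} \<Longrightarrow>
           ((\<lambda>\<tau>. f \<tau> s) has_real_derivative D1f t s) (at t within {a..b})"
    and "\<And>t s. t \<in> {a..b} \<Longrightarrow> s \<in> {c..d} \<Longrightarrow>
           ((\<lambda>\<sigma>. f t \<sigma>) has_real_derivative D2f t s) (at s within {c..d})"
    and "\<And>t s. t \<in> {a..b} \<Longrightarrow> s \<in> {c..d} \<Longrightarrow>
           ((\<lambda>\<sigma>. D1f t \<sigma>) has_real_derivative D21f t s) (at s within {c..d})"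
    and "continuous_on ({a..b} \<times> {c..d}) (\<lambda>(t, s). D1f t s)"
    and "continuous_on ({a..b} \<times> {c..d}) (\<lambda>(t, s). D2f t s)"
    and "continuous_on ({a..b} \<times> {c..d}) (\<lambda>(t, s). D21f t s)"
  shows "integral {a..b} (\<lambda>t. integral {c..d} (\<lambda>s. f t s))
          - 1/2 * ((d - c) * integral {a..b} (\<lambda>t. f t c + f t d)
                   + (b - a) * integral {c..d} (\<lambda>s. f a s + f b s))
          + 1/4 * (b - a) * (d - c) * (f a c + f a d + f b c + f b d)
        \<le> 1/4 * (b - a) * (d - c) *
           integral {a..b} (\<lambda>t. integral {c..d} (\<lambda>s. \<bar>D21f t s\<bar>))"
  proof -
  let ?P = "\<lambda>t. t - (a+b)/2"
  let ?Q = "\<lambda>s. s - (c+d)/2"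
  define G where "G t = integral {c..d} (\<lambda>s. (s - (c+d)/2) * D21f t s)" for t
  define H where "H t = integral {c..d} (\<lambda>s. \<bar>D21f t s\<bar>)" for t
  define K where "K = (b-a)/2 * ((d-c)/2)"
  have ab: "a \<le> b" and cd: "c \<le> d" using assms(1,2) by auto
  have G: "G t = (d-c)/2 * (D1f t c + D1f t d) - integral {c..d} (D1f t)" if t: "t \<in> {a..b}" for t
    unfolding G_def
    by (rule ibp[OF cd, of "D1f t" "D21f t"]) (auto intro: assms(6)[OF t] slice1[OF assms(9) t])
  have I: "integral {a..b} (\<lambda>t. (t - (a+b)/2) * D1f t s) = (b-a)/2 * (f a s + f b s) - integral {a..b} (\<lambda>t. f t s)"
    if s: "s \<in> {c..d}" for s
    by (rule ibp[OF ab, of "\<lambda>t. f t s" "\<lambda>t. D1f t s"]) (auto intro: assms(4)[OF _ s] slice2[OF assms(7) s])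
  have cdc: "c \<in> {c..d}" "d \<in> {c..d}" using cd by auto
  have iPc: "(\<lambda>t. (t - (a+b)/2) * D1f t s) integrable_on {a..b}" if "s \<in> {c..d}" for s
    by (intro integrable_continuous_real continuous_intros slice2[OF assms(7) that])
  have ifc: "(\<lambda>t. f t s) integrable_on {a..b}" if "s \<in> {c..d}" for s
    by (intro integrable_continuous_real continuous_intros slice2[OF assms(3) that])
  have ifa: "(\<lambda>s. f t s) integrable_on {c..d}" if "t \<in> {a..b}" for t
    by (intro integrable_continuous_real slice1[OF assms(3) that])
  have iab: "t \<in> {a..b}" if "t = a \<or> t = b" for t using that ab by auto
  have i3: "(\<lambda>t. integral {c..d} (\<lambda>s. (t - (a+b)/2) * D1f t s)) integrable_on {a..b}"
    using int2[OF contPQ(2)[OF assms(7), of "(a+b)/2"]] by simp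
  have mr: "integral {c..d} (\<lambda>s. (t - (a+b)/2) * D1f t s) = (t - (a+b)/2) * integral {c..d} (D1f t)" for t
    by (rule integral_mult_right)
  have "integral {a..b} (\<lambda>t. ?P t * G t) =
     integral {a..b} (\<lambda>t. (d-c)/2 * ((t - (a+b)/2) * D1f t c) + (d-c)/2 * ((t - (a+b)/2) * D1f t d)
        - integral {c..d} (\<lambda>s. (t - (a+b)/2) * D1f t s))"
  proof (rule integral_cong)
    fix t assume t: "t \<in> {a..b}"
    have "?P t * G t = (d-c)/2 * ((t - (a+b)/2) * D1f t c) + (d-c)/2 * ((t - (a+b)/2) * D1f t d)
        - (t - (a+b)/2) * integral {c..d} (D1f t)"
      unfolding G[OF t] by (simp add: field_simps)
    then show "?P t * G t = (d-c)/2 * ((t - (a+b)/2) * D1f t c) + (d-c)/2 * ((t - (a+b)/2) * D1f t d)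
        - integral {c..d} (\<lambda>s. (t - (a+b)/2) * D1f t s)"
      by (simp only: mr)
  qed
  also have "\<dots> = (d-c)/2 * integral {a..b} (\<lambda>t. (t - (a+b)/2) * D1f t c)
      + (d-c)/2 * integral {a..b} (\<lambda>t. (t - (a+b)/2) * D1f t d)
      - integral {a..b} (\<lambda>t. integral {c..d} (\<lambda>s. (t - (a+b)/2) * D1f t s))"
  proof -
    have j1: "(\<lambda>t. (d-c)/2 * ((t - (a+b)/2) * D1f t c)) integrable_on {a..b}"
      using iPc[OF cdc(1)] by (rule integrable_on_mult_right)
    have j2: "(\<lambda>t. (d-c)/2 * ((t - (a+b)/2) * D1f t d)) integrable_on {a..b}"
      using iPc[OF cdc(2)] by (rule integrable_on_mult_right)
    show ?thesis
      unfolding integral_diff[OF integrable_add[OF j1 j2] i3] integral_add[OF j1 j2] by (simp only: integral_mult_right)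
  qed
  also have "integral {a..b} (\<lambda>t. integral {c..d} (\<lambda>s. (t - (a+b)/2) * D1f t s))
      = integral {c..d} (\<lambda>s. integral {a..b} (\<lambda>t. (t - (a+b)/2) * D1f t s))"
    using swap[OF contPQ(2)[OF assms(7), of "(a+b)/2"]] by simp
  also have "\<dots> = integral {c..d} (\<lambda>s. (b-a)/2 * (f a s + f b s) - integral {a..b} (\<lambda>t. f t s))"
    by (rule integral_cong) (simp add: I)
  also have "\<dots> = (b-a)/2 * integral {c..d} (\<lambda>s. f a s + f b s) - integral {c..d} (\<lambda>s. integral {a..b} (\<lambda>t. f t s))"
  proof -
    have j: "(\<lambda>s. (b-a)/2 * (f a s + f b s)) integrable_on {c..d}"
      by (intro integrable_on_mult_right integrable_add ifa iab) auto
    show ?thesis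
      unfolding integral_diff[OF j int2'[OF assms(3)]] by (simp only: integral_mult_right)
  qed
  also have "integral {c..d} (\<lambda>s. integral {a..b} (\<lambda>t. f t s)) = integral {a..b} (\<lambda>t. integral {c..d} (\<lambda>s. f t s))"
    using swap[OF assms(3)] by simp
  finally have E0: "integral {a..b} (\<lambda>t. ?P t * G t) =
      (d-c)/2 * integral {a..b} (\<lambda>t. (t - (a+b)/2) * D1f t c)
      + (d-c)/2 * integral {a..b} (\<lambda>t. (t - (a+b)/2) * D1f t d)
      - ((b-a)/2 * integral {c..d} (\<lambda>s. f a s + f b s) - integral {a..b} (\<lambda>t. integral {c..d} (\<lambda>s. f t s)))" .
  have E: "integral {a..b} (\<lambda>t. ?P t * G t) =
      integral {a..b} (\<lambda>t. integral {c..d} (\<lambda>s. f t s))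
          - 1/2 * ((d - c) * integral {a..b} (\<lambda>t. f t c + f t d)
                   + (b - a) * integral {c..d} (\<lambda>s. f a s + f b s))
          + 1/4 * (b - a) * (d - c) * (f a c + f a d + f b c + f b d)"
    by (rule alg[OF E0 I[OF cdc(1)] I[OF cdc(2)] integral_add[OF ifc[OF cdc(1)] ifc[OF cdc(2)]]])
  have eqPG: "(\<lambda>t. ?P t * G t) = (\<lambda>t. integral {c..d} (\<lambda>s. (t - (a+b)/2) * (s - (c+d)/2) * D21f t s))"
    unfolding G_def apply (rule ext) apply (subst integral_mult_right[symmetric]) by (simp only: mult.assoc)
  have iL: "(\<lambda>t. ?P t * G t) integrable_on {a..b}"
    unfolding eqPG using int2[OF contPQ(1)[OF assms(9), of "(a+b)/2" "(c+d)/2"]] by simp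
  have iR: "(\<lambda>t. integral {c..d} (\<lambda>s. K * \<bar>D21f t s\<bar>)) integrable_on {a..b}"
    using int2[OF contPQ(3)[OF assms(9), of K]] by simp
  have pw: "?P t * G t \<le> integral {c..d} (\<lambda>s. K * \<bar>D21f t s\<bar>)" if t: "t \<in> {a..b}" for t
  proof -
    have Pb: "\<bar>?P t\<bar> \<le> (b-a)/2" using t by (auto simp: abs_if field_simps)
    have "norm (G t) \<le> integral {c..d} (\<lambda>s. (d-c)/2 * \<bar>D21f t s\<bar>)"
      unfolding G_def
    proof (rule integral_norm_bound_integral)
      show "(\<lambda>s. (s - (c+d)/2) * D21f t s) integrable_on {c..d}"
        by (intro integrable_continuous_real continuous_intros slice1[OF assms(9) t])
      show "(\<lambda>s. (d-c)/2 * \<bar>D21f t s\<bar>) integrable_on {c..d}"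
        by (intro integrable_continuous_real continuous_intros slice1[OF assms(9) t])
      fix s assume s: "s \<in> {c..d}"
      have "\<bar>s - (c+d)/2\<bar> \<le> (d-c)/2" using s by (auto simp: abs_if field_simps)
      then show "norm ((s - (c+d)/2) * D21f t s) \<le> (d-c)/2 * \<bar>D21f t s\<bar>"
        unfolding real_norm_def abs_mult by (rule mult_right_mono) auto
    qed
    then have Gb: "\<bar>G t\<bar> \<le> (d-c)/2 * H t" unfolding H_def by (simp add: integral_mult_right)
    have "?P t * G t \<le> \<bar>?P t\<bar> * \<bar>G t\<bar>" by (metis abs_ge_self abs_mult)
    also have "\<dots> \<le> (b-a)/2 * ((d-c)/2 * H t)"
      using ab by (intro mult_mono Pb Gb) auto
    also have "\<dots> = integral {c..d} (\<lambda>s. K * \<bar>D21f t s\<bar>)"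
      unfolding K_def H_def by (simp add: integral_mult_right)
    finally show ?thesis .
  qed
  have "integral {a..b} (\<lambda>t. ?P t * G t) \<le> integral {a..b} (\<lambda>t. integral {c..d} (\<lambda>s. K * \<bar>D21f t s\<bar>))"
    by (rule integral_le[OF iL iR pw])
  also have "\<dots> = 1/4 * (b - a) * (d - c) * integral {a..b} (\<lambda>t. integral {c..d} (\<lambda>s. \<bar>D21f t s\<bar>))"
    by (simp add: integral_mult_right K_def)
  finally show ?thesis using E by simp
qed

end
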